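(* Let $\mathcal{K}=(\mathcal{O},\mathcal{B})$ be a $\mathcal{BALC}$ knowledge base over a finite set $V$ of discrete random variables. Then $\mathcal{K}$ is consistent if and only if for every world $\omega$ with $P_{\mathcal{B}}(\omega)>0$, the $\mathcal{ALC}$ ontology $\mathcal{O}_\omega$ is consistent.
   Context: $V$ is a finite set of random variables, each $X\in V$ with a finite set of values $\mathrm{val}(X)$. A world $\omega$ assigns to each $X\in V$ a value $\omega(X)\in\mathrm{val}(X)$. A Bayesian network (BN) $\mathcal{B}$ over $V$ consists of a directed acyclic graph on $V$ and, for each $X\in V$, conditional probability tables $P(X=x\mid \pi(X)=\vec{x})$, where $\pi(X)$ is the set of parents of $X$; it defines the joint distribution $P_{\mathcal{B}}(\omega)=\prod_{X\in V}P(X=\omega(X)\mid \pi(X)=\omega(\pi(X)))$. A $V$-literal is a pair $(X,x)$ with $X\in V$, $x\in\mathrm{val}(X)$; a (primitive) context is a set of $V$-literals; a world $\omega$ satisfies a context $\kappa$ ($\omega\models\kappa$) iff $\omega(X)=x$ for all $(X,x)\in\kappa$ (every world satisfies $\emptyset$). A $V$-axiom is an expression $\alpha^\kappa$ where $\alpha$ is an $\mathcal{ALC}$ axiom (a GCI $C\sqsubseteq D$, a concept assertion $C(a)$, or a role assertion $r(a,b)$) and $\kappa$ a context; a $V$-ontology is a finite set of $V$-axioms; a $\mathcal{BALC}$ knowledge base is a pair $(\mathcal{O},\mathcal{B})$ of a $V$-ontology and a BN over $V$. A $V$-interpretation $\mathcal{V}=(\Delta^{\mathcal V},\cdot^{\mathcal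 V},v^{\mathcal V})$ consists of a classical $\mathcal{ALC}$ interpretation $(\Delta^{\mathcal V},\cdot^{\mathcal V})$ and a world $v^{\mathcal V}$; $\mathcal V\models\alpha^\kappa$ iff $v^{\mathcal V}\not\models\kappa$ or $(\Delta^{\mathcal V},\cdot^{\mathcal V})$ satisfies $\alpha$. A probabilistic interpretation $\mathcal P=(\mathcal J,P_{\mathcal J})$ is a finite set $\mathcal J$ of $V$-interpretations with a probability distribution $P_{\mathcal J}$ on $\mathcal J$ giving every element positive probability; it is a model of $\mathcal O$ iff every $\mathcal V\in\mathcal J$ satisfies every axiom of $\mathcal O$; it is consistent with $\mathcal B$ iff for every world $\omega$, $\sum_{\mathcal V\in\mathcal J,\,v^{\mathcal V}=\omega}P_{\mathcal J}(\mathcal V)=P_{\mathcal B}(\omega)$; it is a model of $\mathcal K=(\mathcal O,\mathcal B)$ iff both hold. $\mathcal K$ is consistent iff it has a model. The restriction of $\mathcal O$ to a world $\omega$ is the $\mathcal{ALC}$ ontology $\mathcal{O}_\omega=\{\alpha\mid \alpha^\kappa\in\mathcal O,\ \omega\models\kappa\}$; an $\mathcal{ALC}$ ontology is consistent iff it has a (classical) model. *)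

theory Defs
  imports Complex_Main "HOL-Library.FuncSet"
begin

datatype ('c, 'r) concept =
    Top
  | Bot
  | CName 'c
  | Neg "('c, 'r) concept"
  | Conj "('c, 'r) concept" "('c, 'r) concept"
  | Disj "('c, 'r) concept" "('c, 'r) concept"
  | Ex 'r "('c, 'r) concept"
  | All 'r "('c, 'r) concept"

datatype ('c, 'r, 'i) axiom =
    GCI "('c, 'r) concept" "('c, 'r) concept"
  | CAssert "('c, 'r) concept" 'i
  | RAssert 'r 'i 'i

record ('d, 'c, 'r, 'i) interp =
  dom :: "'d set"
  cn  :: "'c \<Rightarrow> 'd set"
  rn  :: "'r \<Rightarrow> ('d \<times> 'd) set"
  ind :: "'i \<Rightarrow> 'd"

definition wf_interp :: "('d, 'c, 'r, 'i) interp \<Rightarrow> bool" where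
  "wf_interp I \<longleftrightarrow> dom I \<noteq> {} \<and> (\<forall>c. cn I c \<subseteq> dom I)
     \<and> (\<forall>r. rn I r \<subseteq> dom I \<times> dom I) \<and> (\<forall>a. ind I a \<in> dom I)"

fun ext :: "('d, 'c, 'r, 'i) interp \<Rightarrow> ('c, 'r) concept \<Rightarrow> 'd set" where
  "ext I Top = dom I"
| "ext I Bot = {}"
| "ext I (CName c) = cn I c"
| "ext I (Neg C) = dom I - ext I C"
| "ext I (Conj C D) = ext I C \<inter> ext I D"
| "ext I (Disj C D) = ext I C \<union> ext I D"
| "ext I (Ex r C) = {d \<in> dom I. \<exists>e. (d, e) \<in> rn I r \<and> e \<in> ext I C}"
| "ext I (All r C) = {d \<in> dom I. \<forall>e. (d, e) \<in> rn I r \<longrightarrow> e \<in> ext I C}"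

fun sat_axiom :: "('d, 'c, 'r, 'i) interp \<Rightarrow> ('c, 'r, 'i) axiom \<Rightarrow> bool" where
  "sat_axiom I (GCI C D) \<longleftrightarrow> ext I C \<subseteq> ext I D"
| "sat_axiom I (CAssert C a) \<longleftrightarrow> ind I a \<in> ext I C"
| "sat_axiom I (RAssert r a b) \<longleftrightarrow> (ind I a, ind I b) \<in> rn I r"

definition ALC_consistent :: "'d itself \<Rightarrow> ('c, 'r, 'i) axiom set \<Rightarrow> bool" where
  "ALC_consistent (_ :: 'd itself) Ont \<longleftrightarrow>
     (\<exists>I :: ('d, 'c, 'r, 'i) interp. wf_interp I \<and> (\<forall>\<alpha>\<in>Ont. sat_axiom I \<alpha>))"

text \<open>Worlds over V: assignments of a value in val X to each X in V (extensional outside V).\<close>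
definition worlds :: "'v set \<Rightarrow> ('v \<Rightarrow> 'x set) \<Rightarrow> ('v \<Rightarrow> 'x) set" where
  "worlds V val = PiE V val"

definition sat_ctx :: "('v \<Rightarrow> 'x) \<Rightarrow> ('v \<times> 'x) set \<Rightarrow> bool" where
  "sat_ctx \<omega> \<kappa> \<longleftrightarrow> (\<forall>(X, x) \<in> \<kappa>. \<omega> X = x)"

definition is_context :: "'v set \<Rightarrow> ('v \<Rightarrow> 'x set) \<Rightarrow> ('v \<times> 'x) set \<Rightarrow> bool" where
  "is_context V val \<kappa> \<longleftrightarrow> (\<forall>(X, x) \<in> \<kappa>. X \<in> V \<and> x \<in> val X)"

text \<open>A Bayesian network over V: parent function par (a DAG on V) and conditional
  probability tables cpt X x \<rho> = P(X = x | \<pi>(X) = \<rho>), \<rho> an assignment to the parents.\<close>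
definition is_BN :: "'v set \<Rightarrow> ('v \<Rightarrow> 'x set) \<Rightarrow> ('v \<Rightarrow> 'v set)
                     \<Rightarrow> ('v \<Rightarrow> 'x \<Rightarrow> ('v \<Rightarrow> 'x) \<Rightarrow> real) \<Rightarrow> bool" where
  "is_BN V val par cpt \<longleftrightarrow>
     finite V \<and> (\<forall>X\<in>V. finite (val X) \<and> val X \<noteq> {})
     \<and> (\<forall>X\<in>V. par X \<subseteq> V)
     \<and> acyclic {(Y, X). X \<in> V \<and> Y \<in> par X}
     \<and> (\<forall>X\<in>V. \<forall>\<rho>\<in>PiE (par X) val.
           (\<forall>x\<in>val X. cpt X x \<rho> \<ge> 0) \<and> (\<Sum>x\<in>val X. cpt X x \<rho>) = 1)"

definition P_BN :: "'v set \<Rightarrow> ('v \<Rightarrow> 'v set) \<Rightarrow> ('v \<Rightarrow> 'x \<Rightarrow> ('v \<Rightarrow> 'x) \<Rightarrow> real)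
                    \<Rightarrow> ('v \<Rightarrow> 'x) \<Rightarrow> real" where
  "P_BN V par cpt \<omega> = (\<Prod>X\<in>V. cpt X (\<omega> X) (restrict \<omega> (par X)))"

definition is_V_ontology :: "'v set \<Rightarrow> ('v \<Rightarrow> 'x set)
      \<Rightarrow> (('c, 'r, 'i) axiom \<times> ('v \<times> 'x) set) set \<Rightarrow> bool" where
  "is_V_ontology V val Ont \<longleftrightarrow> finite Ont \<and> (\<forall>(\<alpha>, \<kappa>) \<in> Ont. is_context V val \<kappa>)"

definition restrict_ont :: "(('c, 'r, 'i) axiom \<times> ('v \<times> 'x) set) set \<Rightarrow> ('v \<Rightarrow> 'x)
      \<Rightarrow> ('c, 'r, 'i) axiom set" where
  "restrict_ont Ont \<omega> = {\<alpha>. \<exists>\<kappa>. (\<alpha>, \<kappa>) \<in> Ont \<and> sat_ctx \<omega> \<kappa>}"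

text \<open>A V-interpretation is a pair (I, v) of a classical interpretation and a world.\<close>
definition sat_V_axiom :: "('d, 'c, 'r, 'i) interp \<times> ('v \<Rightarrow> 'x)
      \<Rightarrow> ('c, 'r, 'i) axiom \<times> ('v \<times> 'x) set \<Rightarrow> bool" where
  "sat_V_axiom \<V> ax \<longleftrightarrow> \<not> sat_ctx (snd \<V>) (snd ax) \<or> sat_axiom (fst \<V>) (fst ax)"

definition is_prob_interp :: "'v set \<Rightarrow> ('v \<Rightarrow> 'x set)
      \<Rightarrow> (('d, 'c, 'r, 'i) interp \<times> ('v \<Rightarrow> 'x)) set
      \<Rightarrow> (('d, 'c, 'r, 'i) interp \<times> ('v \<Rightarrow> 'x) \<Rightarrow> real) \<Rightarrow> bool" where
  "is_prob_interp V val J PJ \<longleftrightarrow> finite J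
     \<and> (\<forall>\<V>\<in>J. wf_interp (fst \<V>) \<and> snd \<V> \<in> worlds V val \<and> PJ \<V> > 0)
     \<and> (\<Sum>\<V>\<in>J. PJ \<V>) = 1"

definition is_model_BALC :: "'v set \<Rightarrow> ('v \<Rightarrow> 'x set) \<Rightarrow> ('v \<Rightarrow> 'v set)
      \<Rightarrow> ('v \<Rightarrow> 'x \<Rightarrow> ('v \<Rightarrow> 'x) \<Rightarrow> real)
      \<Rightarrow> (('c, 'r, 'i) axiom \<times> ('v \<times> 'x) set) set
      \<Rightarrow> (('d, 'c, 'r, 'i) interp \<times> ('v \<Rightarrow> 'x)) set
      \<Rightarrow> (('d, 'c, 'r, 'i) interp \<times> ('v \<Rightarrow> 'x) \<Rightarrow> real) \<Rightarrow> bool" where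
  "is_model_BALC V val par cpt Ont J PJ \<longleftrightarrow>
     is_prob_interp V val J PJ
     \<and> (\<forall>\<V>\<in>J. \<forall>ax\<in>Ont. sat_V_axiom \<V> ax)
     \<and> (\<forall>\<omega>\<in>worlds V val. (\<Sum>\<V>\<in>{\<V>\<in>J. snd \<V> = \<omega>}. PJ \<V>) = P_BN V par cpt \<omega>)"

definition BALC_consistent :: "'d itself \<Rightarrow> 'v set \<Rightarrow> ('v \<Rightarrow> 'x set) \<Rightarrow> ('v \<Rightarrow> 'v set)
      \<Rightarrow> ('v \<Rightarrow> 'x \<Rightarrow> ('v \<Rightarrow> 'x) \<Rightarrow> real)
      \<Rightarrow> (('c, 'r, 'i) axiom \<times> ('v \<times> 'x) set) set \<Rightarrow> bool" where
  "BALC_consistent (_ :: 'd itself) V val par cpt Ont \<longleftrightarrow>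
     (\<exists>(J :: (('d, 'c, 'r, 'i) interp \<times> ('v \<Rightarrow> 'x)) set) PJ.
        is_model_BALC V val par cpt Ont J PJ)"

end

theory Submission
  imports Defs
begin

lemma sink_exists:
  assumes "is_BN V val par cpt" "V \<noteq> {}"
  shows "\<exists>X\<in>V. \<forall>Y\<in>V. X \<notin> par Y"
proof -
  let ?R = "{(Y, X). X \<in> V \<and> Y \<in> par X}"
  have fin: "finite ?R"
  proof (rule finite_subset)
    show "?R \<subseteq> V \<times> V" using assms(1) unfolding is_BN_def by auto
    show "finite (V \<times> V)" using assms(1) unfolding is_BN_def by auto
  qed
  have ac: "acyclic ?R" using assms(1) unfolding is_BN_def by auto
  have wf: "wf (?R\<inverse>)" by (rule finite_acyclic_wf_converse[OF fin ac])
  obtain z where z: "z \<in> V" "\<And>y. (y, z) \<in> ?R\<inverse> \<Longrightarrow> y \<notin> V"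
    by (rule wfE_min'[OF wf assms(2)]) (rule that)
  have "\<forall>Y\<in>V. z \<notin> par Y"
  proof (intro ballI notI)
    fix Y assume "Y \<in> V" "z \<in> par Y"
    then have "(Y, z) \<in> ?R\<inverse>" by simp
    then show False using z(2) \<open>Y \<in> V\<close> by blast
  qed
  then show ?thesis using z(1) by blast
qed

lemma BN_noself:
  assumes "is_BN V val par cpt" "X \<in> V"
  shows "X \<notin> par X"
proof
  assume "X \<in> par X"
  then have "(X, X) \<in> {(Y, X). X \<in> V \<and> Y \<in> par X}" using assms by auto
  then have "(X, X) \<in> {(Y, X). X \<in> V \<and> Y \<in> par X}\<^sup>+" by auto
  then show False using assms(1) unfolding is_BN_def acyclic_def by blast
qed

lemma sum_PBN:
  assumes "is_BN V val par cpt"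
  shows "(\<Sum>\<omega>\<in>PiE V val. P_BN V par cpt \<omega>) = 1"
  using assms
proof (induction "card V" arbitrary: V)
  case 0
  then have "V = {}" unfolding is_BN_def by auto
  then show ?case by (simp add: P_BN_def)
next
  case (Suc n)
  have finV: "finite V" using Suc.prems unfolding is_BN_def by auto
  then have "V \<noteq> {}" using Suc.hyps(2) by auto
  then obtain X where X: "X \<in> V" "\<forall>Y\<in>V. X \<notin> par Y" using sink_exists[OF Suc.prems] by blast
  define V' where "V' = V - {X}"
  have VV: "V = insert X V'" "X \<notin> V'" using X V'_def by auto
  have parV: "\<And>Y. Y \<in> V \<Longrightarrow> par Y \<subseteq> V" using Suc.prems unfolding is_BN_def by auto
  have parV': "\<And>Y. Y \<in> V \<Longrightarrow> par Y \<subseteq> V'" using X parV V'_def by auto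
  have BN': "is_BN V' val par cpt"
    unfolding is_BN_def
  proof (intro conjI)
    show "finite V'" using finV V'_def by auto
    show "\<forall>X\<in>V'. finite (val X) \<and> val X \<noteq> {}" using Suc.prems V'_def unfolding is_BN_def by auto
    show "\<forall>Xa\<in>V'. par Xa \<subseteq> V'" using parV' V'_def by auto
    show "acyclic {(Y, X). X \<in> V' \<and> Y \<in> par X}"
      apply (rule acyclic_subset[of "{(Y, X). X \<in> V \<and> Y \<in> par X}"])
      using Suc.prems V'_def unfolding is_BN_def by auto
    show "\<forall>X\<in>V'. \<forall>\<rho>\<in>PiE (par X) val. (\<forall>x\<in>val X. cpt X x \<rho> \<ge> 0) \<and> (\<Sum>x\<in>val X. cpt X x \<rho>) = 1"
      using Suc.prems V'_def unfolding is_BN_def by auto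
  qed
  have cardV': "n = card V'" using Suc.hyps(2) finV V'_def X by auto
  have IH: "(\<Sum>\<omega>\<in>PiE V' val. P_BN V' par cpt \<omega>) = 1" using Suc.hyps(1)[OF cardV' BN'] .
  have finV': "finite V'" using finV V'_def by auto
  have finvalX: "finite (val X)" using Suc.prems X unfolding is_BN_def by auto
  have key: "P_BN V par cpt (g(X := y)) = cpt X y (restrict g (par X)) * P_BN V' par cpt g" for g y
  proof -
    have "X \<notin> par X" using parV'[OF X(1)] VV(2) by auto
    then have r1: "restrict (g(X := y)) (par X) = restrict g (par X)" by (auto simp: restrict_def)
    have r2: "restrict (g(X := y)) (par Z) = restrict g (par Z)" if "Z \<in> V'" for Z
      using X(2) that V'_def by (auto simp: restrict_def)
    have "P_BN V par cpt (g(X := y)) = cpt X y (restrict (g(X := y)) (par X)) *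
            (\<Prod>Z\<in>V'. cpt Z ((g(X := y)) Z) (restrict (g(X := y)) (par Z)))"
      unfolding P_BN_def VV(1) using finV' VV(2) by simp
    also have "(\<Prod>Z\<in>V'. cpt Z ((g(X := y)) Z) (restrict (g(X := y)) (par Z))) = P_BN V' par cpt g"
      unfolding P_BN_def using VV(2) r2 by (intro prod.cong) auto
    finally show ?thesis using r1 by metis
  qed
  have inner: "(\<Sum>y\<in>val X. cpt X y (restrict g (par X))) = 1" if "g \<in> PiE V' val" for g
  proof -
    have "restrict g (par X) \<in> PiE (par X) val" using that parV'[OF X(1)] by (auto simp: PiE_iff)
    then show ?thesis using Suc.prems X(1) unfolding is_BN_def by auto
  qed
  have "(\<Sum>\<omega>\<in>PiE V val. P_BN V par cpt \<omega>)
      = (\<Sum>(y, g)\<in>val X \<times> PiE V' val. P_BN V par cpt (g(X := y)))"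
    unfolding VV(1) PiE_insert_eq
    by (subst sum.reindex[OF inj_combinator[OF VV(2)]]) (auto simp: comp_def intro!: sum.cong)
  also have "\<dots> = (\<Sum>y\<in>val X. \<Sum>g\<in>PiE V' val. P_BN V par cpt (g(X := y)))"
    by (rule sum.cartesian_product[symmetric])
  also have "\<dots> = (\<Sum>g\<in>PiE V' val. \<Sum>y\<in>val X. P_BN V par cpt (g(X := y)))"
    by (rule sum.swap)
  also have "\<dots> = (\<Sum>g\<in>PiE V' val. (\<Sum>y\<in>val X. cpt X y (restrict g (par X))) * P_BN V' par cpt g)"
    by (simp only: key sum_distrib_right)
  also have "\<dots> = (\<Sum>g\<in>PiE V' val. P_BN V' par cpt g)"
    by (rule sum.cong) (auto simp: inner)
  finally show ?case using IH by simp
qed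

lemma PBN_nonneg:
  assumes "is_BN V val par cpt" "\<omega> \<in> PiE V val"
  shows "P_BN V par cpt \<omega> \<ge> 0"
proof -
  have "cpt X (\<omega> X) (restrict \<omega> (par X)) \<ge> 0" if X: "X \<in> V" for X
  proof -
    have "restrict \<omega> (par X) \<in> PiE (par X) val" using assms X unfolding is_BN_def by (auto simp: PiE_iff)
    moreover have "\<omega> X \<in> val X" using assms(2) X by auto
    ultimately show ?thesis using assms(1) X unfolding is_BN_def by auto
  qed
  then show ?thesis unfolding P_BN_def by (simp add: prod_nonneg)
qed

theorem mainTheorem1:
  fixes V :: "'v set" and val :: "'v \<Rightarrow> 'x set" and par :: "'v \<Rightarrow> 'v set"
    and cpt :: "'v \<Rightarrow> 'x \<Rightarrow> ('v \<Rightarrow> 'x) \<Rightarrow> real"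
    and Ont :: "(('c, 'r, 'i) axiom \<times> ('v \<times> 'x) set) set"
  assumes "is_BN V val par cpt"
    and "is_V_ontology V val Ont"
  shows "BALC_consistent TYPE('d) V val par cpt Ont \<longleftrightarrow>
         (\<forall>\<omega>\<in>worlds V val. P_BN V par cpt \<omega> > 0 \<longrightarrow>
            ALC_consistent TYPE('d) (restrict_ont Ont \<omega>))"
proof
  assume "BALC_consistent TYPE('d) V val par cpt Ont"
  then obtain J :: "(('d, 'c, 'r, 'i) interp \<times> ('v \<Rightarrow> 'x)) set" and PJ
    where M: "is_model_BALC V val par cpt Ont J PJ" unfolding BALC_consistent_def by blast
  show "\<forall>\<omega>\<in>worlds V val. P_BN V par cpt \<omega> > 0 \<longrightarrow> ALC_consistent TYPE('d) (restrict_ont Ont \<omega>)"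
  proof (intro ballI impI)
    fix \<omega> assume w: "\<omega> \<in> worlds V val" and p: "P_BN V par cpt \<omega> > 0"
    have "(\<Sum>\<V>\<in>{\<V>\<in>J. snd \<V> = \<omega>}. PJ \<V>) > 0" using M w p unfolding is_model_BALC_def by auto
    then have "{\<V>\<in>J. snd \<V> = \<omega>} \<noteq> {}" by (metis sum.empty less_irrefl)
    then obtain I where I: "(I, \<omega>) \<in> J" by auto
    have wf: "wf_interp I" using M I unfolding is_model_BALC_def is_prob_interp_def by auto
    have "\<forall>\<alpha>\<in>restrict_ont Ont \<omega>. sat_axiom I \<alpha>"
    proof
      fix \<alpha> assume "\<alpha> \<in> restrict_ont Ont \<omega>"
      then obtain \<kappa> where "(\<alpha>, \<kappa>) \<in> Ont" "sat_ctx \<omega> \<kappa>" unfolding restrict_ont_def by auto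
      then show "sat_axiom I \<alpha>" using M I unfolding is_model_BALC_def sat_V_axiom_def by fastforce
    qed
    then show "ALC_consistent TYPE('d) (restrict_ont Ont \<omega>)"
      unfolding ALC_consistent_def using wf by blast
  qed
next
  assume H: "\<forall>\<omega>\<in>worlds V val. P_BN V par cpt \<omega> > 0 \<longrightarrow> ALC_consistent TYPE('d) (restrict_ont Ont \<omega>)"
  define W where "W = {\<omega>\<in>worlds V val. P_BN V par cpt \<omega> > 0}"
  define Im where "Im = (\<lambda>\<omega>. SOME I :: ('d, 'c, 'r, 'i) interp. wf_interp I \<and> (\<forall>\<alpha>\<in>restrict_ont Ont \<omega>. sat_axiom I \<alpha>))"
  have ImP: "wf_interp (Im \<omega>) \<and> (\<forall>\<alpha>\<in>restrict_ont Ont \<omega>. sat_axiom (Im \<omega>) \<alpha>)" if "\<omega> \<in> W" for \<omega>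
  proof -
    have "ALC_consistent TYPE('d) (restrict_ont Ont \<omega>)" using H that W_def by auto
    then show ?thesis unfolding Im_def ALC_consistent_def by (rule someI_ex)
  qed
  define J where "J = (\<lambda>\<omega>. (Im \<omega>, \<omega>)) ` W"
  define PJ where "PJ = (\<lambda>\<V> :: ('d, 'c, 'r, 'i) interp \<times> ('v \<Rightarrow> 'x). P_BN V par cpt (snd \<V>))"
  have finW: "finite (worlds V val)" using assms(1) unfolding is_BN_def worlds_def
    by (auto intro: finite_PiE)
  have inj: "inj_on (\<lambda>\<omega>. (Im \<omega>, \<omega>)) W" by (auto intro: inj_onI)
  have nonneg: "\<And>\<omega>. \<omega> \<in> worlds V val \<Longrightarrow> P_BN V par cpt \<omega> \<ge> 0"
    using PBN_nonneg[OF assms(1)] unfolding worlds_def by auto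
  have sumJ: "(\<Sum>\<V>\<in>J. PJ \<V>) = 1"
  proof -
    have "(\<Sum>\<V>\<in>J. PJ \<V>) = (\<Sum>\<omega>\<in>W. P_BN V par cpt \<omega>)"
      unfolding J_def PJ_def by (simp add: sum.reindex[OF inj])
    also have "\<dots> = (\<Sum>\<omega>\<in>worlds V val. P_BN V par cpt \<omega>)"
      unfolding W_def
    proof (rule sum.mono_neutral_left[OF finW])
      show "\<forall>i\<in>worlds V val - {\<omega> \<in> worlds V val. 0 < P_BN V par cpt \<omega>}. P_BN V par cpt i = 0"
        using nonneg by force
    qed auto
    also have "\<dots> = 1" using sum_PBN[OF assms(1)] unfolding worlds_def .
    finally show ?thesis .
  qed
  have "is_model_BALC V val par cpt Ont J PJ"
    unfolding is_model_BALC_def is_prob_interp_def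
  proof (intro conjI)
    show "finite J" unfolding J_def W_def using finW by auto
    show "\<forall>\<V>\<in>J. wf_interp (fst \<V>) \<and> snd \<V> \<in> worlds V val \<and> 0 < PJ \<V>"
      unfolding J_def PJ_def using ImP W_def by auto
    show "(\<Sum>\<V>\<in>J. PJ \<V>) = 1" by (rule sumJ)
    show "\<forall>\<V>\<in>J. \<forall>ax\<in>Ont. sat_V_axiom \<V> ax"
    proof (intro ballI)
      fix \<V> ax assume "\<V> \<in> J" "ax \<in> Ont"
      then obtain \<omega> where w: "\<omega> \<in> W" "\<V> = (Im \<omega>, \<omega>)" unfolding J_def by auto
      obtain \<alpha> \<kappa> where ax: "ax = (\<alpha>, \<kappa>)" by fastforce
      show "sat_V_axiom \<V> ax"
      proof (cases "sat_ctx \<omega> \<kappa>")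
        case True
        then have "\<alpha> \<in> restrict_ont Ont \<omega>" using \<open>ax \<in> Ont\<close> ax unfolding restrict_ont_def by auto
        then show ?thesis using ImP[OF w(1)] w ax unfolding sat_V_axiom_def by auto
      qed (use w ax in \<open>auto simp: sat_V_axiom_def\<close>)
    qed
    show "\<forall>\<omega>\<in>worlds V val. (\<Sum>\<V>\<in>{\<V>\<in>J. snd \<V> = \<omega>}. PJ \<V>) = P_BN V par cpt \<omega>"
    proof
      fix \<omega> assume w: "\<omega> \<in> worlds V val"
      show "(\<Sum>\<V>\<in>{\<V>\<in>J. snd \<V> = \<omega>}. PJ \<V>) = P_BN V par cpt \<omega>"
      proof (cases "P_BN V par cpt \<omega> > 0")
        case True
        then have "{\<V>\<in>J. snd \<V> = \<omega>} = {(Im \<omega>, \<omega>)}" using w unfolding J_def W_def by auto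
        then show ?thesis unfolding PJ_def by simp
      next
        case False
        then have e: "{\<V>\<in>J. snd \<V> = \<omega>} = {}" unfolding J_def W_def by auto
        have p0: "P_BN V par cpt \<omega> = 0" using False nonneg[OF w] by simp
        show ?thesis unfolding e p0 by simp
      qed
    qed
  qed
  then show "BALC_consistent TYPE('d) V val par cpt Ont" unfolding BALC_consistent_def by blast
qed

end
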